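(* Let $V_1,V_2,V_3$ be closed subspaces of a Hilbert space $\mathcal H$ such that for each pair $i\ne j$ neither of $V_i,V_j$ contains the other, and let $0<\alpha_{ij}\le\angle(V_i,V_j)$ with $\varepsilon_{ij}=\cos\alpha_{ij}$ ($\alpha_{ij}=\alpha_{ji}$). Suppose $\varepsilon_{12}^2+\varepsilon_{23}^2+\varepsilon_{13}^2+2\varepsilon_{12}\varepsilon_{23}\varepsilon_{13}<1$. For $v\in\mathcal H$ let $d_i(v)$ be the distance from $v$ to $V_i$ and $d_0(v)$ the distance from $v$ to $V_1\cap V_2\cap V_3$. Then for every $v\in\mathcal H$, $d_0(v)^2\le\begin{pmatrix}d_1(v)&d_2(v)&d_3(v)\end{pmatrix}\begin{pmatrix}1&-\varepsilon_{12}&-\varepsilon_{13}\\-\varepsilon_{12}&1&-\varepsilon_{23}\\-\varepsilon_{13}&-\varepsilon_{23}&1\end{pmatrix}^{-1}\begin{pmatrix}d_1(v)\\d_2(v)\\d_3(v)\end{pmatrix}$.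
   Context: For closed subspaces $W_1,W_2$ neither of which contains the other, the (Friederichs) angle $\angle(W_1,W_2)\in[0,\pi/2]$ is defined by $\cos\angle(W_1,W_2)=\sup\{|\langle w_1,w_2\rangle| : w_i\in W_i,\ \|w_i\|=1,\ w_i\perp W_1\cap W_2\}$. *)

theory Defs
  imports "HOL-Analysis.Analysis"
begin

text \<open>Cosine of the Friedrichs angle between two closed subspaces (neither containing the other).\<close>
definition cos_friedrichs_angle :: "'a::real_inner set \<Rightarrow> 'a set \<Rightarrow> real" where
  "cos_friedrichs_angle W1 W2 =
     Sup {\<bar>w1 \<bullet> w2\<bar> | w1 w2. w1 \<in> W1 \<and> w2 \<in> W2 \<and> norm w1 = 1 \<and> norm w2 = 1
            \<and> (\<forall>u\<in>W1 \<inter> W2. w1 \<bullet> u = 0) \<and> (\<forall>u\<in>W1 \<inter> W2. w2 \<bullet> u = 0)}"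

definition friedrichs_angle :: "'a::real_inner set \<Rightarrow> 'a set \<Rightarrow> real" where
  "friedrichs_angle W1 W2 = arccos (cos_friedrichs_angle W1 W2)"

definition closed_subspace :: "'a::real_normed_vector set \<Rightarrow> bool" where
  "closed_subspace V \<longleftrightarrow> subspace V \<and> closed V"

end

theory Submission
  imports Defs
begin


lemma psd3:
  fixes a b c w1 w2 w3 :: real
  assumes "0 \<le> a" "0 \<le> b" "0 \<le> c" "a\<^sup>2 + c\<^sup>2 + b\<^sup>2 + 2*a*c*b < 1"
  shows "0 \<le> w1\<^sup>2 + w2\<^sup>2 + w3\<^sup>2 - 2*a*w1*w2 - 2*b*w1*w3 - 2*c*w2*w3"
proof -
  have a1: "a\<^sup>2 < 1" using assms by (smt (verit) mult_nonneg_nonneg zero_le_power2)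
  define A where "A = 1 - a\<^sup>2"
  define B where "B = c + a*b"
  define C where "C = 1 - b\<^sup>2"
  have Ap: "A > 0" using a1 A_def by simp
  have det: "A*C - B\<^sup>2 \<ge> 0"
    using assms(4) unfolding A_def B_def C_def by (simp add: power2_eq_square algebra_simps)
  have e: "w1\<^sup>2 + w2\<^sup>2 + w3\<^sup>2 - 2*a*w1*w2 - 2*b*w1*w3 - 2*c*w2*w3
      = (w1 - a*w2 - b*w3)\<^sup>2 + (A*w2\<^sup>2 + C*w3\<^sup>2 - 2*B*w2*w3)"
    unfolding A_def B_def C_def by (simp add: power2_eq_square algebra_simps)
  have "A * (A*w2\<^sup>2 + C*w3\<^sup>2 - 2*B*w2*w3) = (A*w2 - B*w3)\<^sup>2 + (A*C - B\<^sup>2)*w3\<^sup>2"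
    by (simp add: power2_eq_square algebra_simps)
  also have "\<dots> \<ge> 0" using det by simp
  finally have "A*w2\<^sup>2 + C*w3\<^sup>2 - 2*B*w2*w3 \<ge> 0" using Ap
    by (simp add: zero_le_mult_iff)
  then show ?thesis using e by simp
qed

lemma quad_bound:
  fixes a b c d1 d2 d3 y1 y2 y3 :: real
  assumes "0 \<le> a" "0 \<le> b" "0 \<le> c" "a\<^sup>2 + c\<^sup>2 + b\<^sup>2 + 2*a*c*b < 1"
  shows "2*(d1*y1+d2*y2+d3*y3) - (y1\<^sup>2 + y2\<^sup>2 + y3\<^sup>2 - 2*a*y1*y2 - 2*b*y1*y3 - 2*c*y2*y3)
    \<le> (let d = (vector [d1, d2, d3] :: real^3);
                M = (vector [vector [1, - a, - b],
                             vector [- a, 1, - c],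
                             vector [- b, - c, 1]] :: real^3^3)
            in d \<bullet> (matrix_inv M *v d))"
proof -
  define d where "d = (vector [d1, d2, d3] :: real^3)"
  define M where "M = (vector [vector [1, - a, - b],
                             vector [- a, 1, - c],
                             vector [- b, - c, 1]] :: real^3^3)"
  have "det M = 1 - (a\<^sup>2 + c\<^sup>2 + b\<^sup>2 + 2*a*c*b)"
    unfolding M_def by (simp add: det_3 power2_eq_square algebra_simps)
  then have "det M \<noteq> 0" using assms(4) by simp
  then have "invertible M" by (simp add: invertible_det_nz)
  then have MM: "M ** matrix_inv M = mat 1"
    unfolding invertible_def matrix_inv_def by (rule someI2_ex) auto
  define z where "z = matrix_inv M *v d"
  have Mz: "M *v z = d" unfolding z_def by (simp add: matrix_vector_mul_assoc MM)
  have h1: "d1 = z$1 - a*z$2 - b*z$3" and h2: "d2 = - a*z$1 + z$2 - c*z$3"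
    and h3: "d3 = - b*z$1 - c*z$2 + z$3"
    using Mz unfolding M_def d_def
    by (auto simp: vec_eq_iff forall_3 matrix_vector_mult_def sum_3)
  have Q: "d \<bullet> z = d1*z$1 + d2*z$2 + d3*z$3"
    unfolding d_def by (simp add: inner_vec_def sum_3)
  have ps: "0 \<le> (z$1-y1)\<^sup>2 + (z$2-y2)\<^sup>2 + (z$3-y3)\<^sup>2 - 2*a*(z$1-y1)*(z$2-y2)
      - 2*b*(z$1-y1)*(z$3-y3) - 2*c*(z$2-y2)*(z$3-y3)"
    by (rule psd3[OF assms])
  have "2*(d1*y1+d2*y2+d3*y3) - (y1\<^sup>2 + y2\<^sup>2 + y3\<^sup>2 - 2*a*y1*y2 - 2*b*y1*y3 - 2*c*y2*y3)
        \<le> d1*z$1 + d2*z$2 + d3*z$3"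
    using ps unfolding h1 h2 h3 by (simp add: power2_eq_square algebra_simps)
  then show ?thesis using Q unfolding Let_def d_def[symmetric] M_def[symmetric] z_def by simp
qed



definition orth :: "'a::real_inner set \<Rightarrow> 'a set" where
  "orth S = {x. \<forall>s\<in>S. x \<bullet> s = 0}"

lemma infdist_approx:
  assumes "S \<noteq> {}" "e > 0"
  shows "\<exists>s\<in>S. dist x s < infdist x S + e"
proof -
  have "bdd_below ((\<lambda>a. dist x a) ` S)" by (rule bdd_belowI[of _ 0]) auto
  moreover have "(INF a\<in>S. dist x a) < infdist x S + e" using assms infdist_notempty[OF assms(1), of x] by simp
  ultimately show ?thesis using cINF_less_iff[OF assms(1)] by blast
qed

lemma parallelogram:
  fixes a b :: "'a::real_inner"
  shows "(norm (a - b))\<^sup>2 + (norm (a + b))\<^sup>2 = 2*(norm a)\<^sup>2 + 2*(norm b)\<^sup>2"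
  by (simp add: power2_norm_eq_inner inner_simps algebra_simps)

lemma nexp: fixes a s :: "'a::real_inner"
  shows "(norm (a - t *\<^sub>R s))\<^sup>2 = (norm a)\<^sup>2 - 2*t*(a \<bullet> s) + t\<^sup>2*(s \<bullet> s)"
  unfolding power2_norm_eq_inner
  by (simp add: inner_diff_left inner_diff_right inner_commute algebra_simps power2_eq_square)

lemma proj_exists:
  fixes S :: "'a::{real_inner,complete_space} set"
  assumes "subspace S" "closed S"
  shows "\<exists>p\<in>S. x - p \<in> orth S"
proof -
  define d where "d = infdist x S"
  have S0: "S \<noteq> {}" using assms(1) subspace_0 by blast
  have d0: "d \<ge> 0" unfolding d_def by (rule infdist_nonneg)
  have low: "\<And>s. s \<in> S \<Longrightarrow> d \<le> dist x s" unfolding d_def by (rule infdist_le)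
  have "\<forall>n. \<exists>s\<in>S. (dist x s)\<^sup>2 < d\<^sup>2 + 1/Suc n"
  proof
    fix n :: nat
    define r where "r = sqrt (d\<^sup>2 + 1/Suc n)"
    have "sqrt (d\<^sup>2) < r" unfolding r_def by (rule real_sqrt_less_mono) simp
    then have "d < r" using d0 by simp
    then obtain s where s: "s \<in> S" "dist x s < d + (r - d)"
      using infdist_approx[OF S0, of "r - d" x] unfolding d_def by auto
    then have "dist x s < r" by simp
    then have "(dist x s)\<^sup>2 < r\<^sup>2" by (simp add: power_strict_mono)
    also have "r\<^sup>2 = d\<^sup>2 + 1/Suc n" unfolding r_def by simp
    finally show "\<exists>s\<in>S. (dist x s)\<^sup>2 < d\<^sup>2 + 1/Suc n" using s by blast
  qed
  then obtain f where fS: "\<And>n. f n \<in> S" and fd: "\<And>n. (dist x (f n))\<^sup>2 < d\<^sup>2 + 1/Suc n"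
    by metis
  have cb: "(dist (f m) (f n))\<^sup>2 \<le> 2/Suc m + 2/Suc n" for m n
  proof -
    have mid: "(1/2) *\<^sub>R (f m + f n) \<in> S"
      using fS assms(1) by (simp add: subspace_add subspace_scale)
    have "d \<le> dist x ((1/2) *\<^sub>R (f m + f n))" by (rule low[OF mid])
    also have "dist x ((1/2) *\<^sub>R (f m + f n)) = norm ((x - f m) + (x - f n)) / 2"
    proof -
      have "(x - f m) + (x - f n) = 2 *\<^sub>R (x - (1/2) *\<^sub>R (f m + f n))"
        by (simp add: algebra_simps scaleR_2)
      then show ?thesis by (simp add: dist_norm)
    qed
    finally have "2*d \<le> norm ((x - f m) + (x - f n))" by simp
    then have "4*d\<^sup>2 \<le> (norm ((x - f m) + (x - f n)))\<^sup>2"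
    proof -
      have "(2*d)\<^sup>2 \<le> (norm ((x - f m) + (x - f n)))\<^sup>2"
        by (rule power_mono) (use \<open>2*d \<le> _\<close> d0 in auto)
      then show ?thesis by (simp add: power_mult_distrib)
    qed
    moreover have "(norm ((x - f m) - (x - f n)))\<^sup>2 + (norm ((x - f m) + (x - f n)))\<^sup>2
        = 2*(norm (x - f m))\<^sup>2 + 2*(norm (x - f n))\<^sup>2" by (rule parallelogram)
    moreover have "(x - f m) - (x - f n) = f n - f m" by simp
    moreover have "(norm (x - f m))\<^sup>2 < d\<^sup>2 + 1/Suc m" "(norm (x - f n))\<^sup>2 < d\<^sup>2 + 1/Suc n"
      using fd[of m] fd[of n] by (simp_all add: dist_norm)
    ultimately have "(norm (f n - f m))\<^sup>2 \<le> 2/Suc m + 2/Suc n" by simp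
    then show ?thesis by (simp add: dist_norm norm_minus_commute)
  qed
  have "Cauchy f"
  proof (rule metric_CauchyI)
    fix e :: real assume "e > 0"
    then have "e\<^sup>2 > 0" by simp
    obtain M :: nat where M: "4 / e\<^sup>2 < M" using reals_Archimedean2 by blast
    have M': "4 / Suc M < e\<^sup>2"
    proof -
      have "4 < e\<^sup>2 * M" using M \<open>e\<^sup>2 > 0\<close> by (simp add: field_simps)
      also have "\<dots> \<le> e\<^sup>2 * Suc M" using \<open>e\<^sup>2 > 0\<close> by simp
      finally show ?thesis by (simp add: field_simps)
    qed
    show "\<exists>M. \<forall>m\<ge>M. \<forall>n\<ge>M. dist (f m) (f n) < e"
    proof (intro exI allI impI)
      fix m n assume "M \<le> m" "M \<le> n"
      then have "2/Suc m \<le> 2/Suc M" "2/Suc n \<le> 2/Suc M"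
        by (simp_all add: frac_le)
      then have "(dist (f m) (f n))\<^sup>2 < e\<^sup>2" using cb[of m n] M' by simp
      then show "dist (f m) (f n) < e"
        by (rule power2_less_imp_less) (use \<open>e > 0\<close> in auto)
    qed
  qed
  then obtain p where fp: "f \<longlonglongrightarrow> p" using Cauchy_convergent_iff convergent_def by blast
  have pS: "p \<in> S" using closed_sequentially[OF assms(2) fS fp] .
  have "(dist x p)\<^sup>2 \<le> d\<^sup>2"
  proof (rule field_le_epsilon)
    fix e :: real assume "e > 0"
    have lim: "(\<lambda>n. (dist x (f n))\<^sup>2) \<longlonglongrightarrow> (dist x p)\<^sup>2"
      by (intro tendsto_intros fp)
    obtain N :: nat where N: "1 / e < N" using reals_Archimedean2 by blast
    show "(dist x p)\<^sup>2 \<le> d\<^sup>2 + e"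
    proof (rule LIMSEQ_le_const2[OF lim], intro exI allI impI)
      fix n assume "N \<le> n"
      have "1 < e * N" using N \<open>e > 0\<close> by (simp add: field_simps)
      also have "\<dots> \<le> e * Suc n" using \<open>e > 0\<close> \<open>N \<le> n\<close> by simp
      finally have "1 < e * Suc n" .
      then have "1 / Suc n < e" by (simp add: divide_less_eq mult.commute)
      then show "(dist x (f n))\<^sup>2 \<le> d\<^sup>2 + e" using fd[of n] by simp
    qed
  qed
  have "x - p \<in> orth S"
    unfolding orth_def
  proof (intro CollectI ballI)
    fix s assume sS: "s \<in> S"
    show "(x - p) \<bullet> s = 0"
    proof (cases "s = 0")
      case True then show ?thesis by simp
    next
      case False
      define a where "a = (x - p) \<bullet> s"
      define b where "b = s \<bullet> s"
      have bp: "b > 0" using False unfolding b_def by simp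
      define t where "t = a / b"
      have "p + t *\<^sub>R s \<in> S" using pS sS assms(1) by (simp add: subspace_add subspace_scale)
      then have "d \<le> dist x (p + t *\<^sub>R s)" by (rule low)
      then have "d\<^sup>2 \<le> (dist x (p + t *\<^sub>R s))\<^sup>2" using d0 by (simp add: power_mono)
      also have "(dist x (p + t *\<^sub>R s))\<^sup>2 = (dist x p)\<^sup>2 - 2*t*a + t\<^sup>2*b"
      proof -
        have eq: "x - (p + t *\<^sub>R s) = (x - p) - t *\<^sub>R s" by simp
        show ?thesis unfolding dist_norm a_def b_def eq nexp ..
      qed
      finally have "0 \<le> - 2*t*a + t\<^sup>2*b" using \<open>(dist x p)\<^sup>2 \<le> d\<^sup>2\<close> by simp
      also have "- 2*t*a + t\<^sup>2*b = - a\<^sup>2 / b" unfolding t_def using bp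
        by (simp add: field_simps power2_eq_square)
      finally have "0 \<le> - a\<^sup>2 / b" .
      then have "a\<^sup>2 / b \<le> 0" by simp
      then have "a\<^sup>2 \<le> 0" using bp by (simp add: divide_le_0_iff)
      then show ?thesis unfolding a_def by simp
    qed
  qed
  then show ?thesis using pS by blast
qed



lemma orth_subspace: "subspace (orth S)"
  unfolding subspace_def orth_def by (auto simp: inner_add_left)

lemma orth_closed: "closed (orth S)"
proof -
  have "orth S = (\<Inter>s\<in>S. {x. s \<bullet> x = 0})" unfolding orth_def by (auto simp: inner_commute)
  then show ?thesis by (auto intro!: closed_INT closed_hyperplane)
qed

lemma orth_anti: "S \<subseteq> T \<Longrightarrow> orth T \<subseteq> orth S"
  unfolding orth_def by auto

lemma orth_orth_sub: "S \<subseteq> orth (orth S)"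
  unfolding orth_def by (auto simp: inner_commute)

lemma orth_orth_eq:
  fixes S :: "'a::{real_inner,complete_space} set"
  assumes "subspace S" "closed S"
  shows "orth (orth S) = S"
proof
  show "orth (orth S) \<subseteq> S"
  proof
    fix x assume x: "x \<in> orth (orth S)"
    obtain p where p: "p \<in> S" "x - p \<in> orth S" using proj_exists[OF assms] by blast
    have "x \<bullet> (x - p) = 0" using x p(2) unfolding orth_def by auto
    moreover have "(x - p) \<bullet> p = 0" using p unfolding orth_def by auto
    ultimately have "(x - p) \<bullet> (x - p) = 0" by (simp add: inner_diff_left inner_commute)
    then have "x = p" by simp
    then show "x \<in> S" using p by simp
  qed
qed (rule orth_orth_sub)

lemma subspace_closure':
  fixes T :: "'a::real_normed_vector set"
  assumes "subspace T"
  shows "subspace (closure T)"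
  unfolding subspace_def
proof (intro conjI ballI allI)
  show "0 \<in> closure T" using assms subspace_0 closure_subset by blast
next
  fix x y assume x: "x \<in> closure T" and y: "y \<in> closure T"
  show "x + y \<in> closure T" unfolding closure_approachable
  proof (intro allI impI)
    fix e :: real assume e: "e > 0"
    obtain x' where x': "x' \<in> T" "dist x' x < e/2" using x e closure_approachable[of x T]
      by (meson half_gt_zero)
    obtain y' where y': "y' \<in> T" "dist y' y < e/2" using y e closure_approachable[of y T]
      by (meson half_gt_zero)
    have "x' + y' \<in> T" using assms x'(1) y'(1) subspace_add by blast
    moreover have "dist (x' + y') (x + y) < e"
      using dist_triangle_add[of x' y' x y] x'(2) y'(2) by simp
    ultimately show "\<exists>z\<in>T. dist z (x + y) < e" by blast
  qed
next
  fix c :: real and x assume x: "x \<in> closure T"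
  show "c *\<^sub>R x \<in> closure T"
  proof (cases "c = 0")
    case True then show ?thesis using assms subspace_0 closure_subset by fastforce
  next
    case False
    show ?thesis unfolding closure_approachable
    proof (intro allI impI)
      fix e :: real assume e: "e > 0"
      have "e / \<bar>c\<bar> > 0" using e False by simp
      then obtain x' where x': "x' \<in> T" "dist x' x < e / \<bar>c\<bar>" using x closure_approachable[of x T]
        by blast
      have "c *\<^sub>R x' \<in> T" using assms x'(1) subspace_scale by blast
      moreover have "dist (c *\<^sub>R x') (c *\<^sub>R x) = \<bar>c\<bar> * dist x' x"
        by (simp add: dist_norm scaleR_diff_right[symmetric])
      moreover have "\<bar>c\<bar> * dist x' x < e" using x'(2) False by (simp add: field_simps)
      ultimately show "\<exists>z\<in>T. dist z (c *\<^sub>R x) < e" by metis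
    qed
  qed
qed

lemma orth_orth_closure:
  fixes T :: "'a::{real_inner,complete_space} set"
  assumes "subspace T"
  shows "orth (orth T) \<subseteq> closure T"
proof -
  have "orth (closure T) \<subseteq> orth T" by (rule orth_anti) (rule closure_subset)
  then have "orth (orth T) \<subseteq> orth (orth (closure T))" by (rule orth_anti)
  also have "\<dots> = closure T" using subspace_closure'[OF assms] by (simp add: orth_orth_eq)
  finally show ?thesis .
qed

lemma closure_approx:
  assumes "x \<in> closure T" "e > 0"
  shows "\<exists>y\<in>T. norm (x - y) < e"
  using assms closure_approachable[of x T] by (auto simp: dist_norm norm_minus_commute)

lemma infdist_translate:
  fixes V :: "'a::real_normed_vector set"
  assumes "subspace V" "p \<in> V"
  shows "infdist (v - p) V = infdist v V"
proof -
  have ne: "V \<noteq> {}" using assms(2) by auto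
  have A: "infdist (w - q) V \<le> infdist w V" if "q \<in> V" for w q
  proof -
    have "infdist (w - q) V \<le> (INF a\<in>V. dist w a)"
    proof (rule cINF_greatest[OF ne])
      fix a assume "a \<in> V"
      then have "a - q \<in> V" using assms(1) that subspace_diff by blast
      then have "infdist (w - q) V \<le> dist (w - q) (a - q)" by (rule infdist_le)
      also have "\<dots> = dist w a" by (simp add: dist_norm)
      finally show "infdist (w - q) V \<le> dist w a" .
    qed
    then show ?thesis using infdist_notempty[OF ne] by simp
  qed
  have "infdist v V = infdist ((v - p) - (- p)) V" by simp
  also have "\<dots> \<le> infdist (v - p) V" by (rule A) (use assms subspace_neg in blast)
  finally show ?thesis using A[OF assms(2), of v] by simp
qed

lemma inner_le_infdist:
  fixes V :: "'a::real_inner set"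
  assumes "V \<noteq> {}" "x \<in> orth V"
  shows "u \<bullet> x \<le> infdist u V * norm x"
proof (cases "x = 0")
  case True then show ?thesis by simp
next
  case False
  then have nx: "norm x > 0" by simp
  have "u \<bullet> x / norm x \<le> (INF a\<in>V. dist u a)"
  proof (rule cINF_greatest[OF assms(1)])
    fix a assume "a \<in> V"
    then have "a \<bullet> x = 0" using assms(2) unfolding orth_def by (auto simp: inner_commute)
    then have "u \<bullet> x = (u - a) \<bullet> x" by (simp add: inner_diff_left)
    also have "\<dots> \<le> norm (u - a) * norm x" by (rule norm_cauchy_schwarz)
    finally show "u \<bullet> x / norm x \<le> dist u a" using nx by (simp add: dist_norm divide_le_eq)
  qed
  then have "u \<bullet> x / norm x \<le> infdist u V" using infdist_notempty[OF assms(1)] by simp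
  then show ?thesis using nx by (simp add: divide_le_eq)
qed



definition ang_bound :: "'a::real_inner set \<Rightarrow> 'a set \<Rightarrow> real \<Rightarrow> bool" where
  "ang_bound M N c \<longleftrightarrow> (\<forall>m\<in>M. \<forall>n\<in>N. m \<in> orth (M \<inter> N) \<longrightarrow> n \<in> orth (M \<inter> N)
      \<longrightarrow> \<bar>m \<bullet> n\<bar> \<le> c * norm m * norm n)"

lemma ang_sym:
  assumes "ang_bound M N c" shows "ang_bound N M c"
  unfolding ang_bound_def
proof (intro ballI impI)
  fix m n assume "m \<in> N" "n \<in> M" "m \<in> orth (N \<inter> M)" "n \<in> orth (N \<inter> M)"
  then have "\<bar>n \<bullet> m\<bar> \<le> c * norm n * norm m"
    using assms unfolding ang_bound_def by (simp add: Int_commute)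
  then show "\<bar>m \<bullet> n\<bar> \<le> c * norm m * norm n" by (simp add: inner_commute mult.commute mult.left_commute)
qed

lemma stepA:
  fixes M N :: "'a::{real_inner,complete_space} set"
  assumes M: "subspace M" "closed M" and N: "subspace N" "closed N"
    and ang: "ang_bound M N c" and m: "m \<in> M" "m \<in> orth (M \<inter> N)" and n: "n \<in> N"
  shows "(1 - c\<^sup>2) * (norm m)\<^sup>2 \<le> (norm (m + n))\<^sup>2"
proof -
  have "subspace (M \<inter> N)" using M N subspace_inter by blast
  moreover have "closed (M \<inter> N)" using M N by blast
  ultimately obtain n0 where n0: "n0 \<in> M \<inter> N" "n - n0 \<in> orth (M \<inter> N)"
    using proj_exists by blast
  define n1 where "n1 = n - n0"
  have n1N: "n1 \<in> N" unfolding n1_def using N n n0 subspace_diff by blast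
  have o1: "m \<bullet> n0 = 0" using m(2) n0(1) unfolding orth_def by auto
  have o2: "n1 \<bullet> n0 = 0" using n0 unfolding orth_def n1_def by auto
  have mn: "\<bar>m \<bullet> n1\<bar> \<le> c * norm m * norm n1"
    using ang m n1N n0(2) unfolding ang_bound_def n1_def by blast
  have "(norm (m + n))\<^sup>2 = (norm (m + n1))\<^sup>2 + (norm n0)\<^sup>2"
  proof -
    have "m + n = (m + n1) + n0" unfolding n1_def by simp
    then show ?thesis unfolding power2_norm_eq_inner using o1 o2
      by (simp add: inner_add_left inner_add_right inner_commute)
  qed
  also have "(norm (m + n1))\<^sup>2 = (norm m)\<^sup>2 + 2 * (m \<bullet> n1) + (norm n1)\<^sup>2"
    unfolding power2_norm_eq_inner by (simp add: inner_add_left inner_add_right inner_commute)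
  finally have eq: "(norm (m + n))\<^sup>2 = (norm m)\<^sup>2 + 2 * (m \<bullet> n1) + (norm n1)\<^sup>2 + (norm n0)\<^sup>2" .
  have "m \<bullet> n1 \<ge> - (c * norm m * norm n1)" using mn by linarith
  moreover have "0 \<le> (norm n1 - c * norm m)\<^sup>2" by simp
  moreover have "(norm n1 - c * norm m)\<^sup>2 = (norm n1)\<^sup>2 - 2 * (c * norm m * norm n1) + c\<^sup>2 * (norm m)\<^sup>2"
    by (simp add: power2_eq_square algebra_simps)
  moreover have "(1 - c\<^sup>2) * (norm m)\<^sup>2 = (norm m)\<^sup>2 - c\<^sup>2 * (norm m)\<^sup>2"
    by (simp add: algebra_simps)
  moreover have "0 \<le> (norm n0)\<^sup>2" by simp
  ultimately show ?thesis unfolding eq by linarith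
qed


lemma key_lower:
  fixes M N :: "'a::{real_inner,complete_space} set"
  assumes M: "subspace M" "closed M" and N: "subspace N" "closed N"
    and ang: "ang_bound M N c" and sp: "s > 0" and s2: "s\<^sup>2 = 1 - c\<^sup>2"
    and y: "y \<in> orth N" and yT: "y \<in> closure {a + b |a b. a \<in> M \<and> b \<in> N}"
    and p: "p \<in> M" "y - p \<in> orth M"
  shows "s * (norm y)\<^sup>2 \<le> norm p * norm y"
proof (rule field_le_epsilon)
  define T where "T = {a + b |a b. a \<in> M \<and> b \<in> N}"
  have MN: "subspace (M \<inter> N)" "closed (M \<inter> N)" using M N subspace_inter by blast+
  fix e :: real assume e: "e > 0"
  define K where "K = s * norm y + norm p"
  define d where "d = e / (K + 1)"
  have Kp: "K \<ge> 0" unfolding K_def using sp by simp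
  have dp: "d > 0" unfolding d_def using e Kp by simp
  obtain t where t: "t \<in> T" "norm (y - t) < d" using closure_approx[OF yT dp] unfolding T_def by blast
  then obtain a b where ab: "a \<in> M" "b \<in> N" "t = a + b" unfolding T_def by blast
  obtain a0 where a0: "a0 \<in> M \<inter> N" "a - a0 \<in> orth (M \<inter> N)" using proj_exists[OF MN] by blast
  define m where "m = a - a0"
  define n where "n = b + a0"
  have mM: "m \<in> M" unfolding m_def using M ab a0 subspace_diff by blast
  have nN: "n \<in> N" unfolding n_def using N ab a0 subspace_add by blast
  have tmn: "t = m + n" unfolding m_def n_def ab by simp
  have "(1 - c\<^sup>2) * (norm m)\<^sup>2 \<le> (norm (m + n))\<^sup>2"
    using stepA[OF M N ang mM _ nN] a0 unfolding m_def by blast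
  then have "(s * norm m)\<^sup>2 \<le> (norm t)\<^sup>2" unfolding tmn power_mult_distrib s2 .
  then have sm0: "s * norm m \<le> norm t" by (rule power2_le_imp_le) simp_all
  have "norm t \<le> norm y + norm (y - t)" using norm_triangle_ineq4[of y "y - t"] by simp
  then have "norm t \<le> norm y + d" using t(2) by linarith
  with sm0 have sm: "s * norm m \<le> norm y + d" by linarith
  have yn: "y \<bullet> n = 0" using y nN unfolding orth_def by blast
  have "(y - p) \<bullet> m = 0" using p(2) mM unfolding orth_def by blast
  then have ym: "y \<bullet> m = p \<bullet> m" by (simp add: inner_diff_left)
  have "(norm y)\<^sup>2 = y \<bullet> t + y \<bullet> (y - t)" unfolding power2_norm_eq_inner
    by (simp add: inner_diff_right)
  also have "y \<bullet> t = p \<bullet> m" unfolding tmn using yn ym by (simp add: inner_add_right)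
  also have "y \<bullet> (y - t) \<le> norm y * d"
  proof -
    have "y \<bullet> (y - t) \<le> norm y * norm (y - t)" by (rule norm_cauchy_schwarz)
    also have "\<dots> \<le> norm y * d" using t(2) by (simp add: mult_left_mono)
    finally show ?thesis .
  qed
  finally have h1: "(norm y)\<^sup>2 \<le> p \<bullet> m + norm y * d" by simp
  have h2: "p \<bullet> m \<le> norm p * norm m" by (rule norm_cauchy_schwarz)
  have h3: "s * (norm y)\<^sup>2 \<le> s * (p \<bullet> m) + s * (norm y * d)"
    using h1 sp by (metis distrib_left mult_le_cancel_left_pos)
  have h4: "s * (p \<bullet> m) \<le> norm p * (s * norm m)"
    using h2 sp by (simp add: mult_left_mono mult.left_commute)
  have h5: "norm p * (s * norm m) \<le> norm p * (norm y + d)"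
    using sm by (simp add: mult_left_mono)
  have h6: "s * (norm y)\<^sup>2 \<le> norm p * norm y + d * K"
    using h3 h4 h5 unfolding K_def by (simp add: algebra_simps)
  have "d * K \<le> e" unfolding d_def using e Kp by (simp add: field_simps)
  then show "s * (norm y)\<^sup>2 \<le> norm p * norm y + e" using h6 by linarith
qed

lemma sq_norm_diff_orth:
  fixes y p :: "'a::real_inner" assumes yp_p: "(y - p) \<bullet> p = 0"
  shows "(norm (y - p))\<^sup>2 = (norm y)\<^sup>2 - (norm p)\<^sup>2"
proof -
  have "(norm y)\<^sup>2 = (norm ((y - p) + p))\<^sup>2" by simp
  also have "\<dots> = (norm (y - p))\<^sup>2 + 2 * ((y - p) \<bullet> p) + (norm p)\<^sup>2"
    unfolding power2_norm_eq_inner by (simp only: inner_add_left inner_add_right inner_commute[of p "y - p"])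
  finally have "(norm y)\<^sup>2 = (norm (y - p))\<^sup>2 + (norm p)\<^sup>2" using yp_p by simp
  then show ?thesis by simp
qed

lemma angle_orth:
  fixes M N :: "'a::{real_inner,complete_space} set"
  assumes M: "subspace M" "closed M" and N: "subspace N" "closed N"
    and ang: "ang_bound M N c" and c: "0 \<le> c" "c < 1"
    and x: "x \<in> orth M" and y: "y \<in> orth N" "y \<in> orth (orth M \<inter> orth N)"
  shows "\<bar>x \<bullet> y\<bar> \<le> c * norm x * norm y"
proof -
  define s where "s = sqrt (1 - c\<^sup>2)"
  have c2: "c\<^sup>2 < 1" using c by (simp add: power_less_one_iff abs_square_less_1)
  have sp: "s > 0" unfolding s_def using c2 by simp
  have s2: "s\<^sup>2 = 1 - c\<^sup>2" unfolding s_def using c2 by simp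
  define T where "T = {a + b |a b. a \<in> M \<and> b \<in> N}"
  have sT: "subspace T" unfolding T_def using M N subspace_sums by blast
  have "orth T \<subseteq> orth M \<inter> orth N"
  proof
    fix z assume z: "z \<in> orth T"
    have "a \<in> T" if "a \<in> M" for a unfolding T_def using that N subspace_0[of N]
      by (metis (mono_tags, lifting) add.right_neutral mem_Collect_eq)
    moreover have "b \<in> T" if "b \<in> N" for b unfolding T_def using that M subspace_0[of M]
      by (metis (mono_tags, lifting) add_0 mem_Collect_eq)
    ultimately show "z \<in> orth M \<inter> orth N" using z unfolding orth_def by blast
  qed
  then have "orth (orth M \<inter> orth N) \<subseteq> orth (orth T)" by (rule orth_anti)
  then have "y \<in> orth (orth T)" using y(2) by blast
  then have yT: "y \<in> closure T" using orth_orth_closure[OF sT] by blast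
  obtain p where p: "p \<in> M" "y - p \<in> orth M" using proj_exists[OF M] by blast
  have yp_p: "(y - p) \<bullet> p = 0" using p unfolding orth_def by blast
  have key: "s * norm y \<le> norm p"
  proof (cases "y = 0")
    case True then show ?thesis by simp
  next
    case False
    have "s * (norm y)\<^sup>2 \<le> norm p * norm y"
      by (rule key_lower[OF M N ang sp s2 y(1) yT[unfolded T_def] p])
    then have "(s * norm y) * norm y \<le> norm p * norm y" by (simp add: power2_eq_square mult.assoc)
    then show ?thesis using False by (simp add: mult_le_cancel_right)
  qed
  have "(norm (y - p))\<^sup>2 = (norm y)\<^sup>2 - (norm p)\<^sup>2" by (rule sq_norm_diff_orth[OF yp_p])
  also have "\<dots> \<le> (norm y)\<^sup>2 - (s * norm y)\<^sup>2"
    using key sp by (simp add: power_mono)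
  also have "\<dots> = (c * norm y)\<^sup>2" unfolding power_mult_distrib s2 by (simp add: algebra_simps)
  finally have "(norm (y - p))\<^sup>2 \<le> (c * norm y)\<^sup>2" .
  then have ypc: "norm (y - p) \<le> c * norm y" by (rule power2_le_imp_le) (use c in simp)
  have "x \<bullet> p = 0" using x p(1) unfolding orth_def by blast
  then have "x \<bullet> y = x \<bullet> (y - p)" by (simp add: inner_diff_right)
  then have "\<bar>x \<bullet> y\<bar> \<le> norm x * norm (y - p)" by (simp add: Cauchy_Schwarz_ineq2)
  also have "\<dots> \<le> norm x * (c * norm y)" using ypc by (simp add: mult_left_mono)
  finally show ?thesis by (simp add: mult.commute mult.left_commute)
qed



lemma unit_orth_exists:
  fixes V W :: "'a::{real_inner,complete_space} set"
  assumes V: "subspace V" "closed V" and W: "subspace W" "closed W" and nsub: "\<not> V \<subseteq> W"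
  shows "\<exists>w\<in>V. norm w = 1 \<and> w \<in> orth (V \<inter> W)"
proof -
  obtain x where x: "x \<in> V" "x \<notin> W" using nsub by blast
  have I: "subspace (V \<inter> W)" "closed (V \<inter> W)" using V W subspace_inter by blast+
  obtain q where q: "q \<in> V \<inter> W" "x - q \<in> orth (V \<inter> W)" using proj_exists[OF I] by blast
  define z where "z = x - q"
  have zV: "z \<in> V" unfolding z_def using V x q subspace_diff by blast
  have z0: "z \<noteq> 0" unfolding z_def using x q by auto
  define w where "w = (1 / norm z) *\<^sub>R z"
  have "w \<in> V" unfolding w_def using V zV subspace_scale by blast
  moreover have "norm w = 1" unfolding w_def using z0 by simp
  moreover have "w \<in> orth (V \<inter> W)" using q(2) unfolding w_def z_def orth_def by simp
  ultimately show ?thesis by blast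
qed

lemma fried_ang:
  fixes V W :: "'a::{real_inner,complete_space} set"
  assumes V: "closed_subspace V" and W: "closed_subspace W"
    and n1: "\<not> V \<subseteq> W" and n2: "\<not> W \<subseteq> V"
    and a: "0 < a" "a \<le> friedrichs_angle V W"
  shows "ang_bound V W (cos a) \<and> 0 \<le> cos a"
proof -
  have V': "subspace V" "closed V" and W': "subspace W" "closed W"
    using V W unfolding closed_subspace_def by auto
  define Sset where "Sset = {\<bar>w1 \<bullet> w2\<bar> | w1 w2. w1 \<in> V \<and> w2 \<in> W \<and> norm w1 = 1 \<and> norm w2 = 1
            \<and> (\<forall>u\<in>V \<inter> W. w1 \<bullet> u = 0) \<and> (\<forall>u\<in>V \<inter> W. w2 \<bullet> u = 0)}"
  define c where "c = Sup Sset"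
  have cdef: "cos_friedrichs_angle V W = c" unfolding c_def Sset_def cos_friedrichs_angle_def ..
  have bdd: "bdd_above Sset"
  proof (rule bdd_aboveI[of _ 1])
    fix r assume "r \<in> Sset"
    then obtain w1 w2 :: 'a where "r = \<bar>w1 \<bullet> w2\<bar>" "norm w1 = 1" "norm w2 = 1" unfolding Sset_def mem_Collect_eq by blast
    then show "r \<le> 1" using Cauchy_Schwarz_ineq2[of w1 w2] by simp
  qed
  obtain w1 where w1: "w1 \<in> V" "norm w1 = 1" "w1 \<in> orth (V \<inter> W)"
    using unit_orth_exists[OF V' W' n1] by blast
  obtain w2 where w2: "w2 \<in> W" "norm w2 = 1" "w2 \<in> orth (W \<inter> V)"
    using unit_orth_exists[OF W' V' n2] by blast
  have "\<bar>w1 \<bullet> w2\<bar> \<in> Sset" unfolding Sset_def using w1 w2 unfolding orth_def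
    by (auto simp: Int_commute)
  then have ne: "Sset \<noteq> {}" and c0: "0 \<le> c" unfolding c_def
    using cSup_upper[OF _ bdd] by (auto intro: order.trans[OF abs_ge_zero])
  have c1: "c \<le> 1" unfolding c_def
  proof (rule cSup_least[OF ne])
    fix r assume "r \<in> Sset"
    then obtain w1 w2 :: 'a where "r = \<bar>w1 \<bullet> w2\<bar>" "norm w1 = 1" "norm w2 = 1" unfolding Sset_def mem_Collect_eq by blast
    then show "r \<le> 1" using Cauchy_Schwarz_ineq2[of w1 w2] by simp
  qed
  have fa: "friedrichs_angle V W = arccos c" unfolding friedrichs_angle_def cdef ..
  have api: "arccos c \<le> pi / 2" using c0 c1 by (rule arccos_le_pi2)
  have ca: "0 \<le> cos a" using a api fa by (intro cos_ge_zero) auto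
  have "cos (arccos c) \<le> cos a"
    by (rule cos_monotone_0_pi_le) (use a fa api in auto)
  then have cc: "c \<le> cos a" using c0 c1 by simp
  have "ang_bound V W (cos a)"
    unfolding ang_bound_def
  proof (intro ballI impI)
    fix m n assume m: "m \<in> V" "m \<in> orth (V \<inter> W)" and n: "n \<in> W" "n \<in> orth (V \<inter> W)"
    show "\<bar>m \<bullet> n\<bar> \<le> cos a * norm m * norm n"
    proof (cases "m = 0 \<or> n = 0")
      case True then show ?thesis by auto
    next
      case False
      then have pm: "norm m > 0" and pn: "norm n > 0" by auto
      define m' where "m' = (1 / norm m) *\<^sub>R m"
      define n' where "n' = (1 / norm n) *\<^sub>R n"
      have "m' \<in> V" unfolding m'_def using V' m subspace_scale by blast
      moreover have "n' \<in> W" unfolding n'_def using W' n subspace_scale by blast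
      moreover have "norm m' = 1" "norm n' = 1" unfolding m'_def n'_def using pm pn by auto
      moreover have "\<forall>u\<in>V \<inter> W. m' \<bullet> u = 0" "\<forall>u\<in>V \<inter> W. n' \<bullet> u = 0"
        using m(2) n(2) unfolding m'_def n'_def orth_def by auto
      ultimately have "\<bar>m' \<bullet> n'\<bar> \<in> Sset" unfolding Sset_def mem_Collect_eq by blast
      then have "\<bar>m' \<bullet> n'\<bar> \<le> c" unfolding c_def using cSup_upper[OF _ bdd] by blast
      moreover have "\<bar>m' \<bullet> n'\<bar> = \<bar>m \<bullet> n\<bar> / (norm m * norm n)"
        unfolding m'_def n'_def using pm pn by (simp add: abs_mult)
      ultimately have "\<bar>m \<bullet> n\<bar> \<le> c * (norm m * norm n)" using pm pn
        by (simp add: divide_le_eq)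
      also have "\<dots> \<le> cos a * (norm m * norm n)" using cc pm pn by (simp add: mult_right_mono)
      finally show ?thesis by (simp add: mult.assoc)
    qed
  qed
  then show ?thesis using ca by blast
qed



lemma orth_cs: "subspace (orth S)" "closed (orth S)"
  by (rule orth_subspace, rule orth_closed)

lemma dense_decomp:
  fixes V1 V2 V3 :: "'a::{real_inner,complete_space} set"
  assumes V1: "subspace V1" "closed V1" and V2: "subspace V2" "closed V2"
    and V3: "subspace V3" "closed V3"
    and u: "u \<in> orth (V1 \<inter> V2 \<inter> V3)" and e: "e > 0"
  shows "\<exists>x1\<in>orth V1. \<exists>x2\<in>orth V2. \<exists>x3\<in>orth V3. norm (u - (x1 + x2 + x3)) < e"
proof -
  define T12 where "T12 = {a + b |a b. a \<in> orth V1 \<and> b \<in> orth V2}"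
  define T where "T = {t + c |t c. t \<in> T12 \<and> c \<in> orth V3}"
  have s12: "subspace T12" unfolding T12_def by (rule subspace_sums) (rule orth_subspace)+
  have sT: "subspace T" unfolding T_def by (rule subspace_sums[OF s12 orth_subspace])
  have z1: "0 \<in> orth V1" "0 \<in> orth V2" "0 \<in> orth V3" using orth_subspace subspace_0 by blast+
  have i1: "a \<in> T" if "a \<in> orth V1" for a
  proof -
    have "a + 0 \<in> T12" unfolding T12_def using that z1 by blast
    then have "(a + 0) + 0 \<in> T" unfolding T_def using z1 by blast
    then show ?thesis by simp
  qed
  have i2: "a \<in> T" if "a \<in> orth V2" for a
  proof -
    have "0 + a \<in> T12" unfolding T12_def using that z1 by blast
    then have "(0 + a) + 0 \<in> T" unfolding T_def using z1 by blast
    then show ?thesis by simp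
  qed
  have i3: "a \<in> T" if "a \<in> orth V3" for a
  proof -
    have "0 + 0 \<in> T12" unfolding T12_def using that z1 by blast
    then have "(0 + 0) + a \<in> T" unfolding T_def using that by blast
    then show ?thesis by simp
  qed
  have "orth T \<subseteq> V1 \<inter> V2 \<inter> V3"
  proof
    fix z assume z: "z \<in> orth T"
    have "z \<in> orth (orth V1)" using z i1 unfolding orth_def by (auto simp: inner_commute)
    moreover have "z \<in> orth (orth V2)" using z i2 unfolding orth_def by (auto simp: inner_commute)
    moreover have "z \<in> orth (orth V3)" using z i3 unfolding orth_def by (auto simp: inner_commute)
    ultimately show "z \<in> V1 \<inter> V2 \<inter> V3" using orth_orth_eq V1 V2 V3 by blast
  qed
  then have "orth (V1 \<inter> V2 \<inter> V3) \<subseteq> orth (orth T)" by (rule orth_anti)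
  also have "\<dots> \<subseteq> closure T" by (rule orth_orth_closure[OF sT])
  finally have "u \<in> closure T" using u by blast
  then obtain t where t: "t \<in> T" "norm (u - t) < e" using closure_approx[OF _ e] by blast
  then obtain x1 x2 x3 where "x1 \<in> orth V1" "x2 \<in> orth V2" "x3 \<in> orth V3" "t = x1 + x2 + x3"
    unfolding T_def T12_def by blast
  then show ?thesis using t by blast
qed

lemma normalize_decomp:
  fixes V1 V2 V3 :: "'a::{real_inner,complete_space} set"
  assumes V1: "subspace V1" "closed V1" and V2: "subspace V2" "closed V2"
    and V3: "subspace V3" "closed V3"
    and x: "x1 \<in> orth V1" "x2 \<in> orth V2" "x3 \<in> orth V3" and e: "e > 0"
  shows "\<exists>y1\<in>orth V1. \<exists>y2\<in>orth V2. \<exists>y3\<in>orth V3.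
     y2 \<in> orth (orth V1 \<inter> orth V2) \<and> y2 \<in> orth (orth V3 \<inter> orth V2) \<and>
     y3 \<in> orth (orth V1 \<inter> orth V3) \<and> norm ((y1 + y2 + y3) - (x1 + x2 + x3)) < e"
proof -
  define A where "A = orth V1 \<inter> orth V2"
  define B where "B = orth V3 \<inter> orth V2"
  define D where "D = orth V1 \<inter> orth V3"
  have sA: "subspace A" unfolding A_def by (intro subspace_inter orth_subspace)
  have sB: "subspace B" unfolding B_def by (intro subspace_inter orth_subspace)
  have sD: "subspace D" "closed D" unfolding D_def by (intro subspace_inter orth_subspace, intro closed_Int orth_closed)
  define AB where "AB = {a + b |a b. a \<in> A \<and> b \<in> B}"
  have sAB: "subspace AB" unfolding AB_def using sA sB by (rule subspace_sums)
  define C where "C = orth (orth AB)"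
  have sC: "subspace C" "closed C" unfolding C_def by (rule orth_subspace, rule orth_closed)
  obtain q where q: "q \<in> C" "x2 - q \<in> orth C" using proj_exists[OF sC] by blast
  have "q \<in> closure AB" using q(1) orth_orth_closure[OF sAB] unfolding C_def by blast
  then obtain t where t: "t \<in> AB" "norm (q - t) < e" using closure_approx[OF _ e] by blast
  then obtain a b where ab: "a \<in> A" "b \<in> B" "t = a + b" unfolding AB_def by blast
  have "AB \<subseteq> orth V2"
  proof
    fix z assume "z \<in> AB"
    then obtain a b where "a \<in> A" "b \<in> B" "z = a + b" unfolding AB_def by blast
    then show "z \<in> orth V2" unfolding A_def B_def using orth_subspace[of V2] subspace_add by blast
  qed
  then have "orth (orth V2) \<subseteq> orth AB" by (rule orth_anti)
  then have "C \<subseteq> orth (orth (orth V2))" unfolding C_def by (rule orth_anti)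
  also have "orth (orth (orth V2)) = orth V2" by (rule orth_orth_eq[OF orth_subspace orth_closed])
  finally have CV2: "C \<subseteq> orth V2" .
  have ABC: "AB \<subseteq> C" unfolding C_def by (rule orth_orth_sub)
  have zA: "0 \<in> A" and zB: "0 \<in> B" using sA sB subspace_0 by blast+
  have AC: "a' \<in> C" if "a' \<in> A" for a'
  proof -
    have "a' + 0 \<in> AB" unfolding AB_def using that zB by blast
    then show ?thesis using ABC by simp blast
  qed
  have BC: "b' \<in> C" if "b' \<in> B" for b'
  proof -
    have "0 + b' \<in> AB" unfolding AB_def using that zA by blast
    then show ?thesis using ABC by simp blast
  qed
  define y2 where "y2 = x2 - q"
  have y2V: "y2 \<in> orth V2" unfolding y2_def using x(2) q(1) CV2 orth_subspace[of V2] subspace_diff by blast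
  have y2A: "y2 \<in> orth A" unfolding orth_def using q(2) AC unfolding y2_def orth_def by blast
  have y2B: "y2 \<in> orth B" unfolding orth_def using q(2) BC unfolding y2_def orth_def by blast
  define x3a where "x3a = x3 + b"
  have x3aV: "x3a \<in> orth V3" unfolding x3a_def using x(3) ab(2) orth_subspace[of V3] subspace_add
    unfolding B_def by blast
  obtain r where r: "r \<in> D" "x3a - r \<in> orth D" using proj_exists[OF sD] by blast
  define y3 where "y3 = x3a - r"
  have y3V: "y3 \<in> orth V3" unfolding y3_def using x3aV r(1) orth_subspace[of V3] subspace_diff
    unfolding D_def by blast
  define y1 where "y1 = x1 + a + r"
  have y1V: "y1 \<in> orth V1" unfolding y1_def using x(1) ab(1) r(1) orth_subspace[of V1] subspace_add
    unfolding A_def D_def by blast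
  have "(y1 + y2 + y3) - (x1 + x2 + x3) = t - q" unfolding y1_def y2_def y3_def x3a_def ab(3)
    by (simp add: algebra_simps)
  then have "norm ((y1 + y2 + y3) - (x1 + x2 + x3)) < e" using t(2) by (simp add: norm_minus_commute)
  then show ?thesis using y1V y2V y3V y2A y2B r(2) unfolding A_def B_def D_def y3_def by blast
qed



lemma lin_aux:
  fixes X Y S2 U2 UD D2 Q :: real
  assumes "Y \<le> S2" "U2 \<le> X + UD" "2 * X - Y \<le> Q" "S2 \<le> U2 + 2 * UD + D2"
  shows "U2 \<le> Q + 4 * UD + D2"
  using assms by linarith

theorem lemma4p3:
  fixes V1 V2 V3 :: "'a::{real_inner, complete_space} set"
    and a12 a13 a23 :: real
  assumes "closed_subspace V1" "closed_subspace V2" "closed_subspace V3"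
    and "\<not> V1 \<subseteq> V2" "\<not> V2 \<subseteq> V1"
    and "\<not> V1 \<subseteq> V3" "\<not> V3 \<subseteq> V1"
    and "\<not> V2 \<subseteq> V3" "\<not> V3 \<subseteq> V2"
    and "0 < a12" "a12 \<le> friedrichs_angle V1 V2"
    and "0 < a13" "a13 \<le> friedrichs_angle V1 V3"
    and "0 < a23" "a23 \<le> friedrichs_angle V2 V3"
    and "(cos a12)\<^sup>2 + (cos a23)\<^sup>2 + (cos a13)\<^sup>2 + 2 * cos a12 * cos a23 * cos a13 < 1"
  shows "\<forall>v. (infdist v (V1 \<inter> V2 \<inter> V3))\<^sup>2 \<le>
           (let d = (vector [infdist v V1, infdist v V2, infdist v V3] :: real^3);
                M = (vector [vector [1, - cos a12, - cos a13],
                             vector [- cos a12, 1, - cos a23],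
                             vector [- cos a13, - cos a23, 1]] :: real^3^3)
            in d \<bullet> (matrix_inv M *v d))"
proof (intro allI)
  fix v
  have V1: "subspace V1" "closed V1" using assms(1) unfolding closed_subspace_def by auto
  have V2: "subspace V2" "closed V2" using assms(2) unfolding closed_subspace_def by auto
  have V3: "subspace V3" "closed V3" using assms(3) unfolding closed_subspace_def by auto
  have A12: "ang_bound V1 V2 (cos a12)" "0 \<le> cos a12"
    using fried_ang[OF assms(1,2,4,5,10,11)] by auto
  have A13: "ang_bound V1 V3 (cos a13)" "0 \<le> cos a13"
    using fried_ang[OF assms(1,3,6,7,12,13)] by auto
  have A23: "ang_bound V2 V3 (cos a23)" "0 \<le> cos a23"
    using fried_ang[OF assms(2,3,8,9,14,15)] by auto
  note det = assms(16)
  have p12: "0 \<le> cos a12 * cos a23 * cos a13" using A12 A13 A23 by simp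
  have s12: "(cos a12)\<^sup>2 < 1" using det p12 zero_le_power2[of "cos a23"] zero_le_power2[of "cos a13"] by linarith
  have s13: "(cos a13)\<^sup>2 < 1" using det p12 zero_le_power2[of "cos a23"] zero_le_power2[of "cos a12"] by linarith
  have s23: "(cos a23)\<^sup>2 < 1" using det p12 zero_le_power2[of "cos a12"] zero_le_power2[of "cos a13"] by linarith
  have L12: "cos a12 < 1" by (rule power2_less_imp_less) (use s12 in simp_all)
  have L13: "cos a13 < 1" by (rule power2_less_imp_less) (use s13 in simp_all)
  have L23: "cos a23 < 1" by (rule power2_less_imp_less) (use s23 in simp_all)
  define W where "W = V1 \<inter> V2 \<inter> V3"
  have sW: "subspace W" "closed W" unfolding W_def using V1 V2 V3
    by (auto intro: subspace_inter)
  obtain p where p: "p \<in> W" "v - p \<in> orth W" using proj_exists[OF sW] by blast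
  define u where "u = v - p"
  have d1: "infdist u V1 = infdist v V1" unfolding u_def using infdist_translate[OF V1(1)] p(1)
    unfolding W_def by blast
  have d2: "infdist u V2 = infdist v V2" unfolding u_def using infdist_translate[OF V2(1)] p(1)
    unfolding W_def by blast
  have d3: "infdist u V3 = infdist v V3" unfolding u_def using infdist_translate[OF V3(1)] p(1)
    unfolding W_def by blast
  define Q where "Q = (let d = (vector [infdist v V1, infdist v V2, infdist v V3] :: real^3);
                M = (vector [vector [1, - cos a12, - cos a13],
                             vector [- cos a12, 1, - cos a23],
                             vector [- cos a13, - cos a23, 1]] :: real^3^3)
            in d \<bullet> (matrix_inv M *v d))"
  have ne1: "V1 \<noteq> {}" "V2 \<noteq> {}" "V3 \<noteq> {}" using V1 V2 V3 subspace_0 by blast+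
  have main: "(norm u)\<^sup>2 \<le> Q"
  proof (rule field_le_epsilon)
    fix e :: real assume e: "e > 0"
    define U where "U = norm u"
    have U0: "U \<ge> 0" unfolding U_def by simp
    define \<delta> where "\<delta> = min 1 (e / (4 * U + 1))"
    have dp: "\<delta> > 0" unfolding \<delta>_def using e U0 by simp
    have d1': "\<delta> \<le> 1" unfolding \<delta>_def by simp
    have d2': "\<delta> * (4 * U + 1) \<le> e" unfolding \<delta>_def using e U0
      by (smt (verit) le_divide_eq min.cobounded2)
    have uW: "u \<in> orth (V1 \<inter> V2 \<inter> V3)" using p(2) unfolding u_def W_def .
    have hd: "\<delta>/2 > 0" using dp by simp
    obtain x1 x2 x3 where x: "x1 \<in> orth V1" "x2 \<in> orth V2" "x3 \<in> orth V3"
      and xu: "norm (u - (x1 + x2 + x3)) < \<delta>/2"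
      using dense_decomp[OF V1 V2 V3 uW hd] by blast
    obtain y1 y2 y3 where y: "y1 \<in> orth V1" "y2 \<in> orth V2" "y3 \<in> orth V3"
      and yo: "y2 \<in> orth (orth V1 \<inter> orth V2)" "y2 \<in> orth (orth V3 \<inter> orth V2)"
         "y3 \<in> orth (orth V1 \<inter> orth V3)"
      and yx: "norm ((y1 + y2 + y3) - (x1 + x2 + x3)) < \<delta>/2"
      using normalize_decomp[OF V1 V2 V3 x hd] by blast
    define s where "s = y1 + y2 + y3"
    have "u - s = (u - (x1 + x2 + x3)) - ((y1 + y2 + y3) - (x1 + x2 + x3))" unfolding s_def by simp
    then have "norm (u - s) \<le> norm (u - (x1 + x2 + x3)) + norm ((y1 + y2 + y3) - (x1 + x2 + x3))"
      by (metis norm_triangle_ineq4)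
    then have us: "norm (u - s) < \<delta>" using xu yx by linarith
    have g12: "\<bar>y1 \<bullet> y2\<bar> \<le> cos a12 * norm y1 * norm y2"
      by (rule angle_orth[OF V1 V2 A12(1) A12(2) L12 y(1) y(2) yo(1)])
    have g13: "\<bar>y1 \<bullet> y3\<bar> \<le> cos a13 * norm y1 * norm y3"
      by (rule angle_orth[OF V1 V3 A13(1) A13(2) L13 y(1) y(3) yo(3)])
    have g23: "\<bar>y3 \<bullet> y2\<bar> \<le> cos a23 * norm y3 * norm y2"
      by (rule angle_orth[OF V3 V2 ang_sym[OF A23(1)] A23(2) L23 y(3) y(2) yo(2)])
    have i1: "u \<bullet> y1 \<le> infdist v V1 * norm y1" using inner_le_infdist[OF ne1(1) y(1), of u] d1 by simp
    have i2: "u \<bullet> y2 \<le> infdist v V2 * norm y2" using inner_le_infdist[OF ne1(2) y(2), of u] d2 by simp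
    have i3: "u \<bullet> y3 \<le> infdist v V3 * norm y3" using inner_le_infdist[OF ne1(3) y(3), of u] d3 by simp
    have eU: "U\<^sup>2 = u \<bullet> y1 + u \<bullet> y2 + u \<bullet> y3 + u \<bullet> (u - s)"
      unfolding U_def power2_norm_eq_inner s_def by (simp add: inner_add_right inner_diff_right)
    have "u \<bullet> (u - s) \<le> U * norm (u - s)" unfolding U_def by (rule norm_cauchy_schwarz)
    also have "\<dots> \<le> U * \<delta>" using us U0 by (simp add: mult_left_mono)
    finally have eU2: "u \<bullet> (u - s) \<le> U * \<delta>" .
    have eS: "(norm s)\<^sup>2 = (norm y1)\<^sup>2 + (norm y2)\<^sup>2 + (norm y3)\<^sup>2 + 2*(y1 \<bullet> y2) + 2*(y1 \<bullet> y3) + 2*(y3 \<bullet> y2)"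
      unfolding s_def power2_norm_eq_inner by (simp add: inner_add_left inner_add_right inner_commute)
    have "norm s \<le> U + norm (u - s)" unfolding U_def
      using norm_triangle_ineq4[of u "u - s"] by simp
    then have "norm s \<le> U + \<delta>" using us by linarith
    then have "(norm s)\<^sup>2 \<le> (U + \<delta>)\<^sup>2" by (rule power_mono) simp
    also have "(U + \<delta>)\<^sup>2 = U\<^sup>2 + 2 * U * \<delta> + \<delta>\<^sup>2" by (simp add: power2_eq_square algebra_simps)
    finally have eS2: "(norm s)\<^sup>2 \<le> U\<^sup>2 + 2 * U * \<delta> + \<delta>\<^sup>2" .
    have qb: "2*(infdist v V1 * norm y1 + infdist v V2 * norm y2 + infdist v V3 * norm y3)
       - ((norm y1)\<^sup>2 + (norm y2)\<^sup>2 + (norm y3)\<^sup>2 - 2*cos a12*norm y1*norm y2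
          - 2*cos a13*norm y1*norm y3 - 2*cos a23*norm y2*norm y3) \<le> Q"
      unfolding Q_def by (rule quad_bound[OF A12(2) A13(2) A23(2) det])
    have dd: "\<delta>\<^sup>2 \<le> \<delta>" using dp d1' by (simp add: power2_eq_square mult_le_cancel_left1)
    have f1: "y1 \<bullet> y2 \<ge> - (cos a12 * norm y1 * norm y2)" using g12 by linarith
    have f2: "y1 \<bullet> y3 \<ge> - (cos a13 * norm y1 * norm y3)" using g13 by linarith
    have f3: "y3 \<bullet> y2 \<ge> - (cos a23 * norm y2 * norm y3)" using g23 by (simp add: mult_ac)
    have fa: "(norm y1)\<^sup>2 + (norm y2)\<^sup>2 + (norm y3)\<^sup>2 - 2 * (cos a12 * norm y1 * norm y2)
       - 2 * (cos a13 * norm y1 * norm y3) - 2 * (cos a23 * norm y2 * norm y3) \<le> (norm s)\<^sup>2"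
      using eS f1 f2 f3 by linarith
    have fb: "U\<^sup>2 \<le> infdist v V1 * norm y1 + infdist v V2 * norm y2 + infdist v V3 * norm y3 + U * \<delta>"
      using eU eU2 i1 i2 i3 by linarith
    have qb': "2*(infdist v V1 * norm y1 + infdist v V2 * norm y2 + infdist v V3 * norm y3)
       - ((norm y1)\<^sup>2 + (norm y2)\<^sup>2 + (norm y3)\<^sup>2 - 2 * (cos a12 * norm y1 * norm y2)
          - 2 * (cos a13 * norm y1 * norm y3) - 2 * (cos a23 * norm y2 * norm y3)) \<le> Q"
      using qb by (simp add: mult.assoc)
    have eS3: "(norm s)\<^sup>2 \<le> U\<^sup>2 + 2 * (U * \<delta>) + \<delta>\<^sup>2" using eS2 by (simp add: mult.assoc)
    have "U\<^sup>2 \<le> Q + 4 * (U * \<delta>) + \<delta>\<^sup>2"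
      by (rule lin_aux[OF fa fb qb' eS3])
    moreover have "4 * (U * \<delta>) + \<delta>\<^sup>2 \<le> e" using dd d2' by (simp add: algebra_simps)
    ultimately have "U\<^sup>2 \<le> Q + e" by linarith
    then show "(norm u)\<^sup>2 \<le> Q + e" unfolding U_def .
  qed
  have "infdist v W \<le> dist v p" using p(1) by (rule infdist_le)
  also have "dist v p = norm u" unfolding u_def dist_norm ..
  finally have "(infdist v W)\<^sup>2 \<le> (norm u)\<^sup>2" by (rule power_mono) (rule infdist_nonneg)
  then show "(infdist v (V1 \<inter> V2 \<inter> V3))\<^sup>2 \<le> Q" using main unfolding W_def by linarith
qed

end
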